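(* For every $\alpha\in(0,\pi/2]$, the system of two equations in the real unknowns $(d,u_1)$ $$3(1+\cos\alpha)d^2+8\cos\Big(\frac{\alpha}{2}\Big)d\,u_1+6u_1^2-10(1+\alpha\csc\alpha)=0,$$ $$4d^6-24d^4+57d^2-12\sec\Big(\frac{\alpha}{2}\Big)d(d^2-3)u_1+9\sec^2\Big(\frac{\alpha}{2}\Big)u_1^2+105\csc^2\Big(\frac{\alpha}{2}\Big)\big(1-\alpha\csc\alpha\big)=0$$ has at least two real solutions with $d>0$.
   Context: Here $\csc=1/\sin$ and $\sec=1/\cos$. The system describes (in the symmetric case $u_1=u_2$, $v_2=-v_1$) the degree-7 Pythagorean-hodograph curves interpolating the end points, tangent directions, curvatures and arc length of a circular arc of inner angle $2\alpha$ in canonical position. *)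

theory Defs
  imports Complex_Main
begin

definition eq1 :: "real \<Rightarrow> real \<Rightarrow> real \<Rightarrow> real" where
  "eq1 \<alpha> d u = 3 * (1 + cos \<alpha>) * d^2 + 8 * cos (\<alpha> / 2) * d * u + 6 * u^2
                 - 10 * (1 + \<alpha> * (1 / sin \<alpha>))"

definition eq2 :: "real \<Rightarrow> real \<Rightarrow> real \<Rightarrow> real" where
  "eq2 \<alpha> d u = 4 * d^6 - 24 * d^4 + 57 * d^2
                 - 12 * (1 / cos (\<alpha> / 2)) * d * (d^2 - 3) * u
                 + 9 * (1 / cos (\<alpha> / 2))^2 * u^2
                 + 105 * (1 / sin (\<alpha> / 2))^2 * (1 - \<alpha> * (1 / sin \<alpha>))"

end

theory Submission
  imports Defs
begin


lemma alg1: fixes C S :: real assumes "2 + C > 0" "C*C + S*S = 1"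
  shows "1 - (C * 3 * (2 + C) + 3 * S * S) / ((2 + C) * (2 + C)) = (1 - C)^2 / (2 + C)^2"
proof -
  have d: "(2+C)*(2+C) \<noteq> 0" using assms(1) by simp
  have "S*S = 1 - C*C" using assms by simp
  then have n: "C * 3 * (2 + C) + 3 * S * S = 3*(2*C+1)" by (simp add: algebra_simps)
  have "((2+C)*(2+C) - 3*(2*C+1))/((2+C)*(2+C)) = 1 - 3*(2*C+1)/((2+C)*(2+C))"
    using assms(1) by (simp add: diff_divide_distrib d)
  moreover have "(2+C)*(2+C) - 3*(2*C+1) = (1-C)^2" by (simp add: power2_eq_square algebra_simps)
  ultimately show ?thesis unfolding n by (simp add: power2_eq_square)
qed

lemma alg2: fixes C :: real assumes "C > 0"
  shows "2/3 * C + 1/3 * inverse (C^2) - 1 = (C - 1)^2 * (2 * C + 1) / (3 * C^2)"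
proof -
  have "C \<noteq> 0" using assms by simp
  then show ?thesis by (simp add: field_simps power2_eq_square)
qed

lemma low_h:
  fixes h :: real assumes "0 \<le> h" "h < pi/2"
  shows "3 * sin h / (2 + cos h) \<le> h"
proof -
  let ?f = "\<lambda>x::real. x - 3 * sin x / (2 + cos x)"
  have "?f 0 \<le> ?f h"
  proof (rule DERIV_nonneg_imp_nondecreasing[OF assms(1)])
    fix x :: real assume x: "0 \<le> x" "x \<le> h"
    have c: "2 + cos x > 0" using cos_ge_minus_one[of x] by linarith
    have D: "(?f has_real_derivative ((1 - cos x)^2 / (2 + cos x)^2)) (at x)"
      apply (rule derivative_eq_intros refl | rule c)+
        apply (use c in simp)
       apply (rule refl)
      using alg1[of "cos x" "sin x"] sin_cos_squared_add3[of x] c apply simp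
      done
    then show "\<exists>y. (?f has_real_derivative y) (at x) \<and> 0 \<le> y" by (intro exI[of _ "(1 - cos x)^2 / (2 + cos x)^2"]) auto
  qed
  then show ?thesis by simp
qed

lemma up_h:
  fixes h :: real assumes "0 \<le> h" "h < pi/2"
  shows "h \<le> (2 * sin h + sin h / cos h) / 3"
proof -
  let ?f = "\<lambda>x::real. 2/3 * sin x + 1/3 * tan x - x"
  have "?f 0 \<le> ?f h"
  proof (rule DERIV_nonneg_imp_nondecreasing[OF assms(1)])
    fix x :: real assume x: "0 \<le> x" "x \<le> h"
    have c: "cos x > 0" using x assms by (intro cos_gt_zero_pi) auto
    have D: "(?f has_real_derivative (2/3 * cos x + 1/3 * inverse ((cos x)^2) - 1)) (at x)"
      by (rule DERIV_diff[OF DERIV_add[OF DERIV_cmult[OF DERIV_sin] DERIV_cmult[OF DERIV_tan]] DERIV_ident]) (use c in simp)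
    have "(cos x - 1)^2 * (2 * cos x + 1) / (3 * (cos x)^2) \<ge> 0" using c by simp
    then show "\<exists>y. (?f has_real_derivative y) (at x) \<and> 0 \<le> y" using D alg2[OF c] by auto
  qed
  then show ?thesis by (simp add: tan_def add_divide_distrib)
qed

lemma Gform: fixes a d t v :: real assumes "v = (a - t)/3"
  shows "3*d^2+4*d*v+3*v^2 = 3*d^2 + 4*d*a/3 + a^2/3 - (4*d+2*a)/3*t + t^2/3"
  unfolding assms by (simp add: power2_eq_square field_simps) 

lemma L1:
  fixes P e t v :: real
  assumes "10/3 + 2*e \<le> P" "P \<le> 10/3 + 3*e" "0 \<le> e" "e \<le> 1" "0 \<le> t"
    "t^2 = 21*(P - (13/10)^2)" "v = (2*(13/10)^3 - 6*(13/10) - t)/3"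
  shows "3*(13/10)^2 + 4*(13/10)*v + 3*v^2 - (10 + 10*e + P*e) > 0"
proof -
  have "(5::real)^2 \<le> t^2" using assms by (simp add: power2_eq_square)
  then have t5: "5 \<le> t" using assms(5) by (rule power2_le_imp_le)
  have pe: "P*e \<le> (10/3 + 3*e)*e" using assms by (intro mult_right_mono) auto
  have ee: "e*e \<le> e" using assms by (simp add: mult_left_le)
  have G: "3*(13/10)^2 + 4*(13/10)*v + 3*v^2 = 758303/250000 + (403/750)*t + t^2/3"
    using Gform[where d="13/10", OF assms(7)] by (simp add: power2_eq_square power3_eq_cube)
  show ?thesis using G assms(6) t5 pe ee assms(1-4) by (simp add: power2_eq_square algebra_simps)
qed

lemma L2:
  fixes P e t v :: real
  assumes "10/3 + 2*e \<le> P" "P \<le> 10/3 + 3*e" "0 \<le> e" "e \<le> 1" "0 \<le> t"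
    "t^2 = 21*(P - (17/10)^2)" "v = (2*(17/10)^3 - 6*(17/10) - t)/3"
  shows "3*(17/10)^2 + 4*(17/10)*v + 3*v^2 - (10 + 10*e + P*e) < 0"
proof -
  have ee: "e*e \<le> e" using assms by (simp add: mult_left_le)
  have "(3 + 3*e)^2 \<le> t^2" using assms ee by (simp add: power2_eq_square algebra_simps)
  then have t5: "3 + 3*e \<le> t" using assms(5) by (rule power2_le_imp_le)
  have pe: "P*e \<ge> (10/3)*e" using assms by (intro mult_right_mono) auto
  have G: "3*(17/10)^2 + 4*(17/10)*v + 3*v^2 = 1967223/250000 - (1513/750)*t + t^2/3"
    using Gform[where d="17/10", OF assms(7)] by (simp add: power2_eq_square power3_eq_cube)
  show ?thesis using G assms(6) t5 pe ee assms(1-4) by (simp add: power2_eq_square algebra_simps)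
qed

lemma L3:
  fixes P e d v :: real
  assumes "10/3 + 2*e \<le> P" "P \<le> 10/3 + 3*e" "0 \<le> e" "e \<le> 1" 
    "d^2 = P" "v = (2*d^3 - 6*d)/3"
  shows "3*d^2 + 4*d*v + 3*v^2 - (10 + 10*e + P*e) > 0"
proof -
  define p where "p = P - 10/3"
  have p: "p \<ge> 2*e" "p \<le> 3*e" using assms p_def by auto
  have "3*d^2 + 4*d*v + 3*v^2 = (4*P^3 - 16*P^2 + 21*P)/3"
  proof -
    have "3*d^2 + 4*d*v + 3*v^2 = (4*(d^2)^3 - 16*(d^2)^2 + 21*d^2)/3"
      unfolding assms(6) by (simp add: field_simps power2_eq_square power3_eq_cube)
    then show ?thesis using assms(5) by simp
  qed
  also have "\<dots> = 1090/81 + (143/9)*p + 8*p^2 + (4/3)*p^3" unfolding p_def by (simp add: power2_eq_square power3_eq_cube field_simps)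
  finally have F: "3*d^2 + 4*d*v + 3*v^2 = 1090/81 + (143/9)*p + 8*p^2 + (4/3)*p^3" .
  have "p^2 \<ge> 0" "p^3 \<ge> 0" using p assms by auto
  moreover have "p*e \<le> 3*e"
  proof -
    have "p*e \<le> (3*e)*e" using p assms by (intro mult_right_mono) auto
    moreover have "e*e \<le> e" using assms by (simp add: mult_left_le)
    ultimately show ?thesis by linarith
  qed
  moreover have "P*e = (10/3)*e + p*e" unfolding p_def by (simp add: algebra_simps)
  ultimately show ?thesis using F p assms by linarith
qed


lemma Pb:
  fixes h s c :: real
  assumes s: "s > 0" and c: "c > 7/10" "c \<le> 1" and sc: "s^2 = 1 - c^2"
    and hl: "3*s/(2+c) \<le> h" and hu: "h \<le> (2*s + s/c)/3"
  shows "10/3 + 2*(s^2/c^2) \<le> 5*(h - s*c)/(s^3*c)"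
    and "5*(h - s*c)/(s^3*c) \<le> 10/3 + 3*(s^2/c^2)"
proof -
  have c0: "c > 0" using c by linarith
  have s3: "s^3 = s * (1 - c^2)" using sc by (simp add: power3_eq_cube power2_eq_square)
  have pos: "s^3 * c > 0" using s c0 by simp
  have e1: "10/3 + 2*(s^2/c^2) = (4*c^2+6)/(3*c^2)" using sc c0 by (simp add: field_simps)
  have e2: "10/3 + 3*(s^2/c^2) = (c^2+9)/(3*c^2)" using sc c0 by (simp add: field_simps)
  have idl: "15*c^2*(3*s/(2+c) - s*c) - (4*c^2+6)*(s*(1-c^2))*c = s*c*(1-c)^2*(4*c^3+16*c^2+15*c-12)/(2+c)"
    using c0 by (simp add: field_simps power2_eq_square power3_eq_cube)
  have q1: "4*c^3+16*c^2+15*c-12 > 0"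
  proof -
    have "c^3 \<ge> 0" using c0 by auto
    have "(7/10)^2 < c^2" using c by (intro power_strict_mono) auto
    then have "c^2 > 49/100" by (simp add: power2_eq_square)
    then show ?thesis using `c^3 \<ge> 0` c by linarith
  qed
  have "s*c*(1-c)^2*(4*c^3+16*c^2+15*c-12)/(2+c) \<ge> 0" using s c0 q1 by simp
  moreover have "15*c^2*(h - s*c) \<ge> 15*c^2*(3*s/(2+c) - s*c)" using hl c0 by simp
  moreover have "(4*c^2+6)*(s^3*c) = (4*c^2+6)*(s*(1-c^2))*c" by (simp add: s3)
  ultimately have N1: "(4*c^2+6)*(s^3*c) \<le> 15*c^2*(h - s*c)" using idl by linarith
  have "(4*c^2+6)/(3*c^2) \<le> 5*(h - s*c)/(s^3*c)"
    using N1 pos c0 by (simp add: divide_simps) (simp add: algebra_simps)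
  then show "10/3 + 2*(s^2/c^2) \<le> 5*(h - s*c)/(s^3*c)" using e1 by simp
  have idu: "(c^2+9)*(s*(1-c^2))*c - 15*c^2*((2*s + s/c)/3 - s*c) = s*c*(1-c)^2*(4-2*c-c^2)"
    using c0 by (simp add: field_simps power2_eq_square power3_eq_cube)
  have q2: "4-2*c-c^2 \<ge> 0"
  proof -
    have "c^2 \<le> 1" using c c0 by (simp add: power_le_one)
    then show ?thesis using c by linarith
  qed
  have "s*c*(1-c)^2*(4-2*c-c^2) \<ge> 0" using s c0 q2 by simp
  moreover have "15*c^2*(h - s*c) \<le> 15*c^2*((2*s + s/c)/3 - s*c)" using hu c0 by simp
  moreover have "(c^2+9)*(s^3*c) = (c^2+9)*(s*(1-c^2))*c" by (simp add: s3)
  ultimately have N2: "15*c^2*(h - s*c) \<le> (c^2+9)*(s^3*c)" using idu by linarith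
  have "5*(h - s*c)/(s^3*c) \<le> (c^2+9)/(3*c^2)"
    using N2 pos c0 by (simp add: divide_simps) (simp add: algebra_simps)
  then show "5*(h - s*c)/(s^3*c) \<le> 10/3 + 3*(s^2/c^2)" using e2 by simp
qed


lemma keyid:
  fixes \<alpha> h s c P e t d v :: real
  assumes ah: "\<alpha> = 2*h" and s0: "s > 0" and c0: "c > 0" and ch: "cos h = c"
    and sa: "sin \<alpha> = 2*s*c" and ca: "cos \<alpha> = 2*c^2 - 1"
    and Pd: "P = 5*(h - s*c)/(s^3*c)" and ed: "e = s^2/c^2" and sc: "s^2 = 1 - c^2"
    and t: "t^2 = 21*(P - d^2)" and vd: "v = (2*d^3 - 6*d - t)/3"
    and G: "3*d^2 + 4*d*v + 3*v^2 - (10 + 10*e + P*e) = 0"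
    and sh: "sin h = s"
  shows "eq1 \<alpha> d (c*v) = 0 \<and> eq2 \<alpha> d (c*v) = 0"
proof
  have a2: "\<alpha>/2 = h" using ah by simp
  have Ps: "P*s^2 = 5*h/(s*c) - 5" unfolding Pd using s0 c0 by (simp add: field_simps power2_eq_square power3_eq_cube)
  have cQ: "c^2*(10 + 10*e + P*e) = 5 + 5*h/(s*c)"
  proof -
    have "c^2*(10 + 10*e + P*e) = 10*c^2 + 10*s^2 + P*s^2" unfolding ed using c0 by (simp add: field_simps)
    then show ?thesis using Ps sc by simp
  qed
  have K: "\<alpha> * (1 / sin \<alpha>) = h/(s*c)" unfolding sa using s0 c0 by (simp add: ah)
  have "eq1 \<alpha> d (c*v) = 2*c^2*(3*d^2 + 4*d*v + 3*v^2) - 10*(1 + h/(s*c))"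
    unfolding eq1_def a2 ch K ca by (simp add: algebra_simps power2_eq_square)
  also have "\<dots> = 2*(c^2*(10 + 10*e + P*e)) - 10*(1 + h/(s*c))" using G by simp
  also have "\<dots> = 0" unfolding cQ by (simp add: algebra_simps)
  finally show "eq1 \<alpha> d (c*v) = 0" .
  have K2: "(1 / sin (\<alpha>/2))^2 * (1 - \<alpha> * (1 / sin \<alpha>)) = - P/5"
    unfolding a2 K sh Pd using s0 c0 by (simp add: field_simps power2_eq_square power3_eq_cube)
  have "eq2 \<alpha> d (c*v) = 4 * d^6 - 24 * d^4 + 57 * d^2 - 12 * d * (d^2 - 3) * v + 9 * v^2 + 105 * (-P/5)"
    unfolding eq2_def K2[symmetric] a2 ch using c0 by (simp add: field_simps power2_eq_square)
  also have "\<dots> = (2*d^3 - 6*d - 3*v)^2 + 21*d^2 - 21*P" by (simp add: algebra_simps power2_eq_square power3_eq_cube) (simp add: eval_nat_numeral)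
  also have "\<dots> = t^2 + 21*d^2 - 21*P"
  proof -
    have "2*d^3 - 6*d - 3*v = t" using vd by simp
    then show ?thesis by simp
  qed
  also have "\<dots> = 0" using t by simp
  finally show "eq2 \<alpha> d (c*v) = 0" .
qed

theorem lemma4:
  fixes \<alpha> :: real
  assumes "0 < \<alpha>" and "\<alpha> \<le> pi / 2"
  shows "\<exists>S :: (real \<times> real) set. card S \<ge> 2 \<and> finite S \<and>
           (\<forall>(d, u) \<in> S. d > 0 \<and> eq1 \<alpha> d u = 0 \<and> eq2 \<alpha> d u = 0)"
proof -
  define h where "h = \<alpha>/2"
  define s where "s = sin h"
  define c where "c = cos h"
  have ah: "\<alpha> = 2*h" unfolding h_def by simp
  have h0: "0 < h" "h \<le> pi/4" using assms unfolding h_def by auto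
  have hpi: "h < pi/2" using h0 pi_gt_zero by linarith
  have s0: "s > 0" unfolding s_def using h0 hpi by (intro sin_gt_zero) auto
  have c0: "c > 0" unfolding c_def using h0 hpi by (intro cos_gt_zero_pi) auto
  have c1: "c \<le> 1" unfolding c_def by simp
  have sc: "s^2 = 1 - c^2" unfolding s_def c_def by (simp add: sin_squared_eq)
  have sa: "sin \<alpha> = 2*s*c" unfolding ah s_def c_def by (simp add: sin_double)
  have ca: "cos \<alpha> = 2*c^2 - 1" unfolding ah c_def by (simp add: cos_double_cos)
  have "cos \<alpha> \<ge> 0" using assms by (intro cos_ge_zero) auto
  then have c2: "c^2 \<ge> 1/2" using ca by simp
  have c7: "c > 7/10"
  proof (rule ccontr)
    assume "\<not> c > 7/10"
    then have "c^2 \<le> (7/10)^2" using c0 by (intro power_mono) auto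
    then show False using c2 by (simp add: power2_eq_square)
  qed
  have hl: "3*s/(2+c) \<le> h" unfolding s_def c_def using low_h[of h] h0 hpi by simp
  have hu: "h \<le> (2*s + s/c)/3" unfolding s_def c_def using up_h[of h] h0 hpi by simp
  define P where "P = 5*(h - s*c)/(s^3*c)"
  define e where "e = s^2/c^2"
  have Pl: "10/3 + 2*e \<le> P" and Pu: "P \<le> 10/3 + 3*e"
    unfolding P_def e_def using Pb[OF s0 c7 c1 sc hl hu] by auto
  have e0: "0 \<le> e" unfolding e_def by simp
  have e1: "e \<le> 1" unfolding e_def using sc c2 c0 by simp
  define Q where "Q = 10 + 10*e + P*e"
  define V where "V = (\<lambda>d::real. (2*d^3 - 6*d - sqrt(21*(P - d^2)))/3)"
  define G where "G = (\<lambda>d::real. 3*d^2 + 4*d*V d + 3*(V d)^2 - Q)"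
  have key: "eq1 \<alpha> d (c * V d) = 0 \<and> eq2 \<alpha> d (c * V d) = 0" if "d^2 \<le> P" "G d = 0" for d
  proof -
    have ch: "cos h = c" "sin h = s" unfolding c_def s_def by auto
    have T: "(sqrt (21*(P - d^2)))^2 = 21*(P - d^2)" using real_sqrt_pow2[of "21*(P - d^2)"] that(1) by simp
    have Vd: "V d = (2*d^3 - 6*d - sqrt (21*(P - d^2)))/3" unfolding V_def by simp
    have Gd: "3*d^2 + 4*d*V d + 3*(V d)^2 - (10 + 10*e + P*e) = 0" using that(2) by (simp only: G_def Q_def)
    show ?thesis by (rule keyid[OF ah s0 c0 ch(1) sa ca P_def e_def sc T Vd Gd ch(2)])
  qed
  have P13: "(13/10)^2 \<le> P" "(17/10)^2 < P" using Pl e0 by (auto simp: power2_eq_square)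
  have g1: "G (13/10) > 0"
  proof -
    have t1: "0 \<le> sqrt(21*(P - (13/10)^2))" using P13 by simp
    have t2: "(sqrt(21*(P - (13/10)^2)))^2 = 21*(P - (13/10)^2)" using P13 by (intro real_sqrt_pow2) simp
    have v1: "V (13/10) = (2*(13/10)^3 - 6*(13/10) - sqrt(21*(P - (13/10)^2)))/3" by (simp only: V_def)
    note L1[OF Pl Pu e0 e1 t1 t2 v1]
    then show ?thesis by (simp only: G_def Q_def)
  qed
  have g2: "G (17/10) < 0"
  proof -
    have t1: "0 \<le> sqrt(21*(P - (17/10)^2))" using P13 by simp
    have t2: "(sqrt(21*(P - (17/10)^2)))^2 = 21*(P - (17/10)^2)" using P13 by (intro real_sqrt_pow2) simp
    have v1: "V (17/10) = (2*(17/10)^3 - 6*(17/10) - sqrt(21*(P - (17/10)^2)))/3" by (simp only: V_def)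
    note L2[OF Pl Pu e0 e1 t1 t2 v1]
    then show ?thesis by (simp only: G_def Q_def)
  qed
  define r where "r = sqrt P"
  have r2: "r^2 = P" unfolding r_def using Pl e0 by simp
  have r17: "17/10 < r" unfolding r_def using real_less_rsqrt[OF P13(2)] by simp
  have g3: "G r > 0"
  proof -
    have v3: "V r = (2*r^3 - 6*r)/3" unfolding V_def using r2 by simp
    have "3*r^2 + 4*r*V r + 3*(V r)^2 - (10 + 10*e + P*e) > 0" by (rule L3[OF Pl Pu e0 e1 r2 v3])
    then show ?thesis by (simp only: G_def Q_def)
  qed
  have cont: "continuous_on {a..b} G" for a b unfolding G_def V_def by (intro continuous_intros) auto
  obtain x1 where x1: "13/10 \<le> x1" "x1 \<le> 17/10" "G x1 = 0"
    using IVT2'[of G "17/10" 0 "13/10", OF _ _ _ cont] g1 g2 by auto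
  obtain x2 where x2: "17/10 \<le> x2" "x2 \<le> r" "G x2 = 0"
    using IVT'[of G "17/10" 0 r, OF _ _ _ cont] g2 g3 r17 by auto
  have x1l: "x1 < 17/10" using x1 g2 by (cases "x1 = 17/10") auto
  have x1P: "x1^2 \<le> P"
  proof -
    have "x1^2 \<le> (17/10)^2" using x1 by (intro power_mono) auto
    then show ?thesis using P13 by simp
  qed
  have x2P: "x2^2 \<le> P"
  proof -
    have "x2^2 \<le> r^2" using x2 by (intro power_mono) auto
    then show ?thesis using r2 by simp
  qed
  let ?S = "{(x1, c * V x1), (x2, c * V x2)}"
  have ne: "x1 \<noteq> x2" using x1l x2 by auto
  have "card ?S = 2" using ne by auto
  moreover have "finite ?S" by simp
  moreover have "\<forall>(d, u) \<in> ?S. d > 0 \<and> eq1 \<alpha> d u = 0 \<and> eq2 \<alpha> d u = 0"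
  proof -
    have "x1 > 0" "x2 > 0" using x1 x2 by linarith+
    then show ?thesis using key[OF x1P x1(3)] key[OF x2P x2(3)] by simp
  qed
  ultimately show ?thesis by (intro exI[of _ ?S]) (simp only: le_refl)
qed

end
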